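(* For every positive integer $l'$ there is a constant $C_{l'}$ such that for all $n$, every $(n-l')$-trace $l'$-Sperner family $\mathcal{F}\subseteq 2^{[n]}$ satisfies $|\mathcal{F}|\le C_{l'}\, n^{-1/3}\binom{n}{\lfloor n/2\rfloor}$.
   Context: $[n]=\{1,\dots,n\}$. A chain of length $m$ is a sequence of sets $F_1\subsetneq\dots\subsetneq F_m$; a family is $k$-Sperner if it contains no chain of length $k+1$. For a family $\mathcal{F}$ and a set $X$, $\mathcal{F}|_X=\{F\cap X: F\in\mathcal{F}\}$. A family $\mathcal{F}\subseteq 2^{[n]}$ is $l$-trace $k$-Sperner if for every $l$-element subset $L\subseteq[n]$, the family $\mathcal{F}|_L$ is $k$-Sperner. *)

theory Defs
  imports Main "HOL-Library.Cardinality" Complex_Main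
begin

definition is_chain :: "nat set list \<Rightarrow> bool" where
  "is_chain cs \<longleftrightarrow> (\<forall>i. Suc i < length cs \<longrightarrow> cs ! i \<subset> cs ! Suc i)"

definition k_sperner :: "nat \<Rightarrow> nat set set \<Rightarrow> bool" where
  "k_sperner k F \<longleftrightarrow>
     \<not> (\<exists>cs. length cs = k + 1 \<and> is_chain cs \<and> set cs \<subseteq> F)"

definition trace :: "nat set set \<Rightarrow> nat set \<Rightarrow> nat set set" where
  "trace F X = (\<lambda>A. A \<inter> X) ` F"

definition trace_sperner :: "nat \<Rightarrow> nat \<Rightarrow> nat \<Rightarrow> nat set set \<Rightarrow> bool" where
  "trace_sperner n l k F \<longleftrightarrow>
     (\<forall>L. L \<subseteq> {1..n} \<longrightarrow> card L = l \<longrightarrow> k_sperner k (trace F L))"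

end

theory Submission
  imports Defs
begin

lemma core_count:
  fixes G :: "nat set set" and Z :: "nat set \<Rightarrow> nat set"
  assumes GP: "G \<subseteq> Pow {1..n}"
    and Zf: "\<And>A. A \<in> G \<Longrightarrow> finite (Z A) \<and> card (Z A) \<le> z"
    and blk: "\<And>A B x w. A \<in> G \<Longrightarrow> B \<in> G \<Longrightarrow> A - B \<subseteq> {x} \<Longrightarrow> w \<in> B - A \<Longrightarrow> w \<noteq> x
                 \<Longrightarrow> x \<notin> Z A \<Longrightarrow> w \<notin> Z A \<Longrightarrow> False"
  shows "(\<Sum>A\<in>G. card A - z) \<le> 2 ^ (Suc z) * 2 ^ n"
proof -
  have finG: "finite G" using GP finite_subset by (metis finite_Pow_iff finite_atLeastAtMost)
  have finA: "\<And>A. A \<in> G \<Longrightarrow> finite A" using GP finite_subset by blast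
  define Pairs where "Pairs = Sigma G (\<lambda>A. A - Z A)"
  define fib where "fib S = {p \<in> Pairs. fst p - {snd p} = S}" for S
  have "(\<Sum>A\<in>G. card A - z) \<le> (\<Sum>A\<in>G. card (A - Z A))"
  proof (rule sum_mono)
    fix A assume "A \<in> G"
    then have "card A - card (Z A) \<le> card (A - Z A)" using Zf diff_card_le_card_Diff by blast
    then show "card A - z \<le> card (A - Z A)" using Zf[OF \<open>A \<in> G\<close>] by linarith
  qed
  also have "\<dots> = card Pairs" unfolding Pairs_def
    using finG finA by (subst card_SigmaI) auto
  also have "Pairs = (\<Union>S\<in>Pow {1..n}. fib S)"
  proof (intro equalityI subsetI)
    fix p assume p: "p \<in> Pairs"
    then have "fst p \<in> G" unfolding Pairs_def by (auto simp: mem_Sigma_iff)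
    then have "fst p - {snd p} \<in> Pow {1..n}" using GP by blast
    then show "p \<in> (\<Union>S\<in>Pow {1..n}. fib S)" using p unfolding fib_def by blast
  next
    fix p assume "p \<in> (\<Union>S\<in>Pow {1..n}. fib S)"
    then show "p \<in> Pairs" unfolding fib_def by blast
  qed
  also have "card \<dots> \<le> (\<Sum>S\<in>Pow {1..n}. card (fib S))"
    by (rule card_UN_le) simp
  also have "\<dots> \<le> of_nat (card (Pow {1..n::nat})) * 2 ^ (Suc z)"
  proof (rule sum_bounded_above)
    fix S assume "S \<in> Pow {1..n}"
    show "card (fib S) \<le> 2 ^ Suc z"
    proof (cases "fib S = {}")
      case True then show ?thesis by simp
    next
      case False
      then obtain A0 x0 where p0: "(A0, x0) \<in> fib S" by auto
      then have A0G: "A0 \<in> G" and x0: "x0 \<in> A0" "x0 \<notin> Z A0" and S: "S = A0 - {x0}"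
        unfolding fib_def Pairs_def by auto
      have inj: "inj_on fst (fib S)"
        unfolding inj_on_def fib_def Pairs_def by (auto simp: mem_Sigma_iff)
      have sub: "fst ` fib S \<subseteq> (\<lambda>Y. S \<union> Y) ` Pow (Z A0) \<union> (\<lambda>Y. A0 \<union> Y) ` Pow (Z A0)"
      proof
        fix B assume "B \<in> fst ` fib S"
        then obtain x where Bx: "(B, x) \<in> fib S" by auto
        then have BG: "B \<in> G" and SB: "S \<subseteq> B" unfolding fib_def Pairs_def by auto
        have BZ: "B - A0 \<subseteq> Z A0"
        proof
          fix w assume w: "w \<in> B - A0"
          show "w \<in> Z A0"
          proof (rule ccontr)
            assume "w \<notin> Z A0"
            moreover have "A0 - B \<subseteq> {x0}" using S SB by auto
            moreover have "w \<noteq> x0" using w x0 by auto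
            ultimately show False using blk[OF A0G BG _ w] x0 by blast
          qed
        qed
        show "B \<in> (\<lambda>Y. S \<union> Y) ` Pow (Z A0) \<union> (\<lambda>Y. A0 \<union> Y) ` Pow (Z A0)"
        proof (cases "x0 \<in> B")
          case True
          then have "B = A0 \<union> (B - A0)" using S SB by auto
          then show ?thesis using BZ by blast
        next
          case False
          then have "B = S \<union> (B - A0)" using S SB by auto
          then show ?thesis using BZ by blast
        qed
      qed
      have fz: "finite (Z A0)" "card (Z A0) \<le> z" using Zf[OF A0G] by auto
      have "card (fib S) = card (fst ` fib S)" using inj card_image by metis
      also have "\<dots> \<le> card ((\<lambda>Y. S \<union> Y) ` Pow (Z A0) \<union> (\<lambda>Y. A0 \<union> Y) ` Pow (Z A0))"
        using sub fz by (intro card_mono) auto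
      also have "\<dots> \<le> card ((\<lambda>Y. S \<union> Y) ` Pow (Z A0)) + card ((\<lambda>Y. A0 \<union> Y) ` Pow (Z A0))"
        by (rule card_Un_le)
      also have "\<dots> \<le> card (Pow (Z A0)) + card (Pow (Z A0))"
        by (intro add_mono card_image_le) (use fz in auto)
      also have "\<dots> = 2 ^ card (Z A0) + 2 ^ card (Z A0)" using fz by (simp add: card_Pow)
      also have "\<dots> \<le> 2 ^ z + 2 ^ z" using fz by (intro add_mono power_increasing) auto
      finally show ?thesis by simp
    qed
  qed
  also have "\<dots> = 2 ^ (Suc z) * 2 ^ n" by (simp add: card_Pow)
  finally show ?thesis .
qed

fun P :: "nat set set \<Rightarrow> nat \<Rightarrow> nat set \<Rightarrow> nat set \<Rightarrow> bool" where
  "P F 0 Z A = True"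
| "P F (Suc j) Z A = (\<exists>B\<in>F. \<exists>x w. A - B \<subseteq> {x} \<and> w \<in> B - A \<and> w \<noteq> x \<and> x \<notin> Z \<and> w \<notin> Z
        \<and> P F j (insert x (insert w Z)) B)"

lemma P_path:
  assumes "A \<in> F" "P F j Z A"
  shows "\<exists>cs Xs Ws. length cs = Suc j \<and> cs ! 0 = A \<and> set cs \<subseteq> F \<and> finite Xs \<and> finite Ws
    \<and> card Xs \<le> j \<and> card Ws \<le> j \<and> Xs \<inter> Ws = {} \<and> Xs \<inter> Z = {} \<and> Ws \<inter> Z = {}
    \<and> (\<forall>i<j. cs ! i - cs ! Suc i \<subseteq> Xs \<and> (cs ! Suc i - cs ! i) \<inter> Ws \<noteq> {})"
  using assms
proof (induction j arbitrary: Z A)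
  case 0
  then show ?case by (intro exI[of _ "[A]"] exI[of _ "{}"]) auto
next
  case (Suc j)
  from Suc.prems obtain B x w where B: "B \<in> F" "A - B \<subseteq> {x}" "w \<in> B - A" "w \<noteq> x" "x \<notin> Z" "w \<notin> Z"
    "P F j (insert x (insert w Z)) B" by (auto simp del: P.simps simp: P.simps(2))
  obtain cs Xs Ws where IH: "length cs = Suc j" "cs ! 0 = B" "set cs \<subseteq> F"
    "finite Xs" "finite Ws" "card Xs \<le> j" "card Ws \<le> j" "Xs \<inter> Ws = {}"
    "Xs \<inter> insert x (insert w Z) = {}" "Ws \<inter> insert x (insert w Z) = {}"
    "\<forall>i<j. cs ! i - cs ! Suc i \<subseteq> Xs \<and> (cs ! Suc i - cs ! i) \<inter> Ws \<noteq> {}"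
    using Suc.IH[OF B(1) B(7)] by (elim exE conjE) (rule that; assumption)
  show ?case
  proof (rule exI[of _ "A # cs"], rule exI[of _ "insert x Xs"], rule exI[of _ "insert w Ws"], intro conjI)
    show "card (insert x Xs) \<le> Suc j" using IH(4,6)
      by (simp add: card_insert_if)
    show "card (insert w Ws) \<le> Suc j" using IH(5,7)
      by (simp add: card_insert_if)
    show "\<forall>i<Suc j. (A # cs) ! i - (A # cs) ! Suc i \<subseteq> insert x Xs \<and>
        ((A # cs) ! Suc i - (A # cs) ! i) \<inter> insert w Ws \<noteq> {}"
    proof (intro allI impI)
      fix i assume i: "i < Suc j"
      show "(A # cs) ! i - (A # cs) ! Suc i \<subseteq> insert x Xs \<and>
        ((A # cs) ! Suc i - (A # cs) ! i) \<inter> insert w Ws \<noteq> {}"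
      proof (cases i)
        case 0
        have "(A # cs) ! Suc i = B" using 0 IH(2) by simp
        then show ?thesis using B(2,3) 0 by auto
      next
        case (Suc i')
        then have "i' < j" using i by simp
        then have "cs ! i' - cs ! Suc i' \<subseteq> Xs" "(cs ! Suc i' - cs ! i') \<inter> Ws \<noteq> {}"
          using IH(11) by auto
        then show ?thesis using Suc by auto
      qed
    qed
    show "length (A # cs) = Suc (Suc j)" using IH(1) by simp
    show "(A # cs) ! 0 = A" by simp
    show "set (A # cs) \<subseteq> F" using IH(3) Suc.prems(1) by simp
    show "finite (insert x Xs)" "finite (insert w Ws)" using IH(4,5) by simp_all
    show "insert x Xs \<inter> insert w Ws = {}" using IH(8,9,10) B(4) by blast
    show "insert x Xs \<inter> Z = {}" using IH(9) B(5) by blast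
    show "insert w Ws \<inter> Z = {}" using IH(10) B(6) by blast
  qed
qed

lemma P_contra:
  assumes FP: "F \<subseteq> Pow {1..n}" and ts: "trace_sperner n (n - l) l F" and n: "2 * l \<le> n"
    and A: "A \<in> F"
  shows "\<not> P F l {} A"
proof
  assume PA: "P F l {} A"
  obtain cs Xs Ws where C: "length cs = Suc l" "set cs \<subseteq> F"
    "finite Xs" "finite Ws" "card Xs \<le> l" "card Ws \<le> l" "Xs \<inter> Ws = {}"
    "\<forall>i<l. cs ! i - cs ! Suc i \<subseteq> Xs \<and> (cs ! Suc i - cs ! i) \<inter> Ws \<noteq> {}"
    using P_path[OF A PA] by (elim exE conjE) (rule that; assumption)
  define X0 where "X0 = Xs \<inter> {1..n}"
  define R where "R = ({1..n} - Ws) - X0"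
  have cX0: "card X0 \<le> l" unfolding X0_def using C(3,5) by (meson card_mono inf_le1 le_trans)
  have X0sub: "X0 \<subseteq> {1..n} - Ws" unfolding X0_def using C(7) by auto
  have "card ({1..n} - Ws) \<ge> n - l"
  proof -
    have "card {1..n} - card Ws \<le> card ({1..n} - Ws)" by (rule diff_card_le_card_Diff) (use C in auto)
    then show ?thesis using C(6) by simp
  qed
  then have "card R \<ge> l - card X0" unfolding R_def
    using X0sub n cX0 by (subst card_Diff_subset) (auto intro: finite_subset)
  then obtain T where T: "T \<subseteq> R" "card T = l - card X0" "finite T"
    by (meson obtain_subset_with_card_n)
  define X where "X = X0 \<union> T"
  have fX0: "finite X0" unfolding X0_def by auto
  have cX: "card X = l" unfolding X_def using T fX0 cX0
    by (subst card_Un_disjoint) (auto simp: R_def)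
  have Xsub: "X \<subseteq> {1..n} - Ws" unfolding X_def using T X0sub R_def by auto
  define L where "L = {1..n} - X"
  have XS: "X \<subseteq> {1..n}" using Xsub by auto
  have L: "L \<subseteq> {1..n}" "card L = n - l" unfolding L_def using XS cX
    by (auto simp: card_Diff_subset finite_subset[OF XS])
  define cs' where "cs' = map (\<lambda>S. S \<inter> L) cs"
  have "length cs' = l + 1" using C(1) unfolding cs'_def by simp
  moreover have "set cs' \<subseteq> trace F L" using C(2) unfolding cs'_def trace_def by auto
  moreover have "is_chain cs'"
    unfolding is_chain_def
  proof (intro allI impI)
    fix i assume i: "Suc i < length cs'"
    then have il: "i < l" using C(1) unfolding cs'_def by simp
    have si: "cs ! i \<in> F" "cs ! Suc i \<in> F" using C(1,2) il by (auto intro!: nth_mem[THEN subsetD[OF C(2)]])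
    have d: "cs ! i - cs ! Suc i \<subseteq> Xs" "(cs ! Suc i - cs ! i) \<inter> Ws \<noteq> {}" using C(8) il by auto
    have s1: "cs ! i \<inter> L \<subseteq> cs ! Suc i \<inter> L"
    proof
      fix e assume e: "e \<in> cs ! i \<inter> L"
      show "e \<in> cs ! Suc i \<inter> L"
      proof (rule ccontr)
        assume "e \<notin> cs ! Suc i \<inter> L"
        then have "e \<in> Xs" using d e by auto
        moreover have "e \<in> {1..n}" using e L by auto
        ultimately have "e \<in> X" unfolding X_def X0_def by auto
        then show False using e L_def by auto
      qed
    qed
    obtain w where w: "w \<in> cs ! Suc i" "w \<notin> cs ! i" "w \<in> Ws" using d by auto
    have "w \<in> {1..n}" using w(1) si(2) FP by blast
    then have "w \<in> L" using w Xsub unfolding L_def by auto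
    then have "cs ! i \<inter> L \<subset> cs ! Suc i \<inter> L" using s1 w by auto
    then show "cs' ! i \<subset> cs' ! Suc i" using i unfolding cs'_def by simp
  qed
  ultimately have "\<not> k_sperner l (trace F L)" unfolding k_sperner_def by blast
  then show False using ts L unfolding trace_sperner_def by blast
qed

definition R :: "nat set set \<Rightarrow> nat \<Rightarrow> nat \<Rightarrow> nat set \<Rightarrow> bool" where
  "R F l j A = (\<forall>Z. finite Z \<longrightarrow> card Z \<le> 2 * (l - j) \<longrightarrow> P F j Z A)"

lemma sum_bound:
  assumes FP: "F \<subseteq> Pow {1..n}" and ts: "trace_sperner n (n - l) l F" and n: "2 * l \<le> n"
    and l: "l > 0"
  shows "(\<Sum>A\<in>F. card A - 2 * l) \<le> l * (2 ^ Suc (2 * l) * 2 ^ n)"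
proof -
  have finF: "finite F" using FP by (meson finite_Pow_iff finite_atLeastAtMost finite_subset)
  define g where "g A = (LEAST j. \<not> R F l (Suc j) A)" for A
  have gprop: "g A < l \<and> R F l (g A) A \<and> \<not> R F l (Suc (g A)) A" if A: "A \<in> F" for A
  proof -
    have nR: "\<not> R F l (Suc (l - 1)) A"
      using P_contra[OF FP ts n A] l unfolding R_def by (auto intro!: exI[of _ "{}"])
    have "g A \<le> l - 1" unfolding g_def by (rule Least_le) (rule nR)
    moreover have ng: "\<not> R F l (Suc (g A)) A" unfolding g_def by (rule LeastI) (rule nR)
    moreover have "R F l (g A) A"
    proof (cases "g A")
      case 0 then show ?thesis unfolding R_def by simp
    next
      case (Suc k)
      then have "k < g A" by simp
      then have "\<not> \<not> R F l (Suc k) A" unfolding g_def by (rule not_less_Least)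
      then show ?thesis using Suc by simp
    qed
    ultimately show ?thesis using l by auto
  qed
  have "(\<Sum>A\<in>F. card A - 2 * l) = (\<Sum>j\<in>{..<l}. \<Sum>A\<in>{A\<in>F. g A = j}. card A - 2 * l)"
    by (rule sum.group[symmetric]) (use finF gprop in auto)
  also have "\<dots> \<le> (\<Sum>j\<in>{..<l}. 2 ^ Suc (2 * l) * 2 ^ n)"
  proof (rule sum_mono)
    fix j assume j: "j \<in> {..<l}"
    define G where "G = {A\<in>F. g A = j}"
    define Z where "Z A = (SOME Z. finite Z \<and> card Z \<le> 2 * (l - Suc j) \<and> \<not> P F (Suc j) Z A)" for A
    have Zp: "finite (Z A) \<and> card (Z A) \<le> 2 * (l - Suc j) \<and> \<not> P F (Suc j) (Z A) A" if "A \<in> G" for A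
    proof -
      have "\<not> R F l (Suc j) A" using gprop that unfolding G_def by auto
      then have "\<exists>Z. finite Z \<and> card Z \<le> 2 * (l - Suc j) \<and> \<not> P F (Suc j) Z A"
        unfolding R_def by auto
      then show ?thesis unfolding Z_def by (rule someI_ex)
    qed
    have "(\<Sum>A\<in>G. card A - 2 * l) \<le> 2 ^ Suc (2 * l) * 2 ^ n"
    proof (rule core_count[where Z = Z])
      show "G \<subseteq> Pow {1..n}" using FP unfolding G_def by auto
      show "finite (Z A) \<and> card (Z A) \<le> 2 * l" if "A \<in> G" for A using Zp[OF that] by auto
    next
      fix A B x w assume AG: "A \<in> G" and BG: "B \<in> G" and st: "A - B \<subseteq> {x}" "w \<in> B - A" "w \<noteq> x"
        "x \<notin> Z A" "w \<notin> Z A"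
      have RB: "R F l j B" using gprop BG unfolding G_def by auto
      have fz: "finite (Z A)" "card (Z A) \<le> 2 * (l - Suc j)" using Zp[OF AG] by auto
      have "card (insert x (insert w (Z A))) \<le> card (Z A) + 2"
        using fz(1) by (simp add: card_insert_if)
      also have "\<dots> \<le> 2 * (l - j)" using fz(2) j by simp
      finally have "P F j (insert x (insert w (Z A))) B" using RB fz(1) unfolding R_def by auto
      moreover have "B \<in> F" using BG unfolding G_def by auto
      ultimately have "P F (Suc j) (Z A) A" using st by auto
      then show False using Zp[OF AG] by auto
    qed
    then show "(\<Sum>A\<in>{A\<in>F. g A = j}. card A - 2 * l) \<le> 2 ^ Suc (2 * l) * 2 ^ n"
      unfolding G_def .
  qed
  also have "\<dots> = l * (2 ^ Suc (2 * l) * 2 ^ n)" by simp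
  finally show ?thesis .
qed

lemma compl_ts:
  assumes FP: "F \<subseteq> Pow {1..n}" and ts: "trace_sperner n m k F"
  shows "trace_sperner n m k ((\<lambda>A. {1..n} - A) ` F)"
  unfolding trace_sperner_def
proof (intro allI impI)
  fix L assume L: "L \<subseteq> {1..n}" "card L = m"
  show "k_sperner k (trace ((\<lambda>A. {1..n} - A) ` F) L)"
    unfolding k_sperner_def
  proof
    assume "\<exists>cs. length cs = k + 1 \<and> is_chain cs \<and> set cs \<subseteq> trace ((\<lambda>A. {1..n} - A) ` F) L"
    then obtain cs where cs: "length cs = k + 1" "is_chain cs" "set cs \<subseteq> trace ((\<lambda>A. {1..n} - A) ` F) L"
      by blast
    define cs2 where "cs2 = rev (map (\<lambda>T. L - T) cs)"
    have "length cs2 = k + 1" using cs unfolding cs2_def by simp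
    moreover have "set cs2 \<subseteq> trace F L"
    proof
      fix T2 assume "T2 \<in> set cs2"
      then obtain T where T: "T \<in> set cs" "T2 = L - T" unfolding cs2_def by auto
      then obtain A where A: "A \<in> F" "T = ({1..n} - A) \<inter> L" using cs(3) unfolding trace_def by auto
      have "T2 = A \<inter> L" using T(2) A(2) L(1) by auto
      then show "T2 \<in> trace F L" using A(1) unfolding trace_def by auto
    qed
    moreover have "is_chain cs2"
      unfolding is_chain_def
    proof (intro allI impI)
      fix i assume i: "Suc i < length cs2"
      then have ik: "Suc i \<le> k" using cs(1) unfolding cs2_def by simp
      define a where "a = k - Suc i"
      have a: "Suc a < length cs" "k - i = Suc a" using ik cs(1) unfolding a_def by auto
      have e1: "cs2 ! i = L - cs ! Suc a" unfolding cs2_def using i cs(1) a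
        by (simp add: rev_nth)
      have e2: "cs2 ! Suc i = L - cs ! a" unfolding cs2_def using i cs(1) a a_def
        by (simp add: rev_nth)
      have ch: "cs ! a \<subset> cs ! Suc a" using cs(2) a(1) unfolding is_chain_def by blast
      have "cs ! Suc a \<in> trace ((\<lambda>A. {1..n} - A) ` F) L" using cs(3) nth_mem[OF a(1)] by blast
      then have sub: "cs ! Suc a \<subseteq> L" unfolding trace_def by auto
      show "cs2 ! i \<subset> cs2 ! Suc i" unfolding e1 e2 using ch sub by auto
    qed
    ultimately show False using ts L unfolding trace_sperner_def k_sperner_def by blast
  qed
qed

lemma big_bound:
  assumes FP: "F \<subseteq> Pow {1..n}" and ts: "trace_sperner n (n - l) l F" and n: "8 * l \<le> n"
    and l: "l > 0"
  shows "n * card {A\<in>F. n \<le> 2 * card A} \<le> 4 * (l * (2 ^ Suc (2 * l) * 2 ^ n))"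
proof -
  have finF: "finite F" using FP by (meson finite_Pow_iff finite_atLeastAtMost finite_subset)
  have "n * card {A\<in>F. n \<le> 2 * card A} = (\<Sum>A\<in>{A\<in>F. n \<le> 2 * card A}. n)" by simp
  also have "\<dots> \<le> (\<Sum>A\<in>{A\<in>F. n \<le> 2 * card A}. 4 * (card A - 2 * l))"
    by (rule sum_mono) (use n in auto)
  also have "\<dots> \<le> (\<Sum>A\<in>F. 4 * (card A - 2 * l))"
    by (rule sum_mono2) (use finF in auto)
  also have "\<dots> = 4 * (\<Sum>A\<in>F. card A - 2 * l)" by (simp add: sum_distrib_left)
  also have "\<dots> \<le> 4 * (l * (2 ^ Suc (2 * l) * 2 ^ n))"
    using sum_bound[OF FP ts _ l] n by (simp add: mult.commute mult.left_commute)
  finally show ?thesis .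
qed

lemma total_bound:
  assumes FP: "F \<subseteq> Pow {1..n}" and ts: "trace_sperner n (n - l) l F" and n: "8 * l \<le> n"
    and l: "l > 0"
  shows "n * card F \<le> 8 * (l * (2 ^ Suc (2 * l) * 2 ^ n))"
proof -
  define c where "c A = {1..n} - A" for A :: "nat set"
  define F' where "F' = c ` F"
  have F'P: "F' \<subseteq> Pow {1..n}" unfolding F'_def c_def by auto
  have ts': "trace_sperner n (n - l) l F'" unfolding F'_def c_def by (rule compl_ts[OF FP ts])
  have finF: "finite F" using FP by (meson finite_Pow_iff finite_atLeastAtMost finite_subset)
  have finF': "finite F'" using finF unfolding F'_def by simp
  define S where "S = {A\<in>F. n \<le> 2 * card A}"
  define S' where "S' = {A\<in>F. 2 * card A \<le> n}"
  have inj: "inj_on c (Pow {1..n})" unfolding inj_on_def c_def by auto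
  have "card S' = card (c ` S')" using inj FP unfolding S'_def
    by (intro card_image[symmetric]) (rule inj_on_subset[OF inj], auto)
  also have "\<dots> \<le> card {B\<in>F'. n \<le> 2 * card B}"
  proof (rule card_mono)
    show "finite {B\<in>F'. n \<le> 2 * card B}" using finF' by simp
    show "c ` S' \<subseteq> {B\<in>F'. n \<le> 2 * card B}"
    proof
      fix B assume "B \<in> c ` S'"
      then obtain A where A: "A \<in> F" "2 * card A \<le> n" "B = c A" unfolding S'_def by auto
      have "A \<subseteq> {1..n}" using A(1) FP by auto
      then have "card B = n - card A" unfolding A(3) c_def by (simp add: card_Diff_subset finite_subset)
      then show "B \<in> {B\<in>F'. n \<le> 2 * card B}" using A unfolding F'_def by auto
    qed
  qed
  finally have cS': "card S' \<le> card {B\<in>F'. n \<le> 2 * card B}" .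
  have "F \<subseteq> S \<union> S'" unfolding S_def S'_def by auto
  then have "card F \<le> card (S \<union> S')"
    by (intro card_mono) (auto simp: S_def S'_def finF)
  also have "\<dots> \<le> card S + card S'" by (rule card_Un_le)
  finally have "card F \<le> card S + card S'" .
  then have "n * card F \<le> n * card S + n * card {B\<in>F'. n \<le> 2 * card B}"
  proof -
    have "n * card F \<le> n * (card S + card S')" using \<open>card F \<le> card S + card S'\<close> by simp
    also have "\<dots> \<le> n * (card S + card {B\<in>F'. n \<le> 2 * card B})" using cS' by simp
    finally show ?thesis by (simp add: distrib_left)
  qed
  also have "\<dots> \<le> 4 * (l * (2 ^ Suc (2 * l) * 2 ^ n)) + 4 * (l * (2 ^ Suc (2 * l) * 2 ^ n))"
    using big_bound[OF FP ts n l] big_bound[OF F'P ts' n l] unfolding S_def by (rule add_mono)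
  finally show ?thesis by (simp add: mult.commute mult.left_commute)
qed

lemma binom_step: "Suc m * (2 * Suc m choose Suc m) = 2 * (2 * m + 1) * (2 * m choose m)"
  by (metis Suc_eq_plus1 Suc_times_binomial Suc_times_binomial_add
    add_2_eq_Suc add_mult_distrib mult_Suc_right nat_mult_1 one_add_one)

lemma cb16: "1 \<le> m \<Longrightarrow> (16::nat) ^ m \<le> 4 * m * (2 * m choose m) ^ 2"
proof (induction m rule: nat_induct_at_least)
  case base then show ?case by simp
next
  case (Suc m)
  define b where "b = 2 * m choose m"
  define b' where "b' = 2 * Suc m choose Suc m"
  have e: "Suc m * b' = 2 * (2 * m + 1) * b" unfolding b_def b'_def by (rule binom_step)
  have "Suc m * (4 * Suc m * b' ^ 2) = 4 * (Suc m * b') ^ 2" by (simp only: power2_eq_square ac_simps)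
  also have "\<dots> = 16 * ((2 * m + 1) ^ 2 * b ^ 2)" unfolding e by (simp only: power_mult_distrib) simp
  also have "\<dots> \<ge> 16 * ((4 * m * Suc m) * b ^ 2)"
    by (intro mult_le_mono2 mult_le_mono1) (simp add: power2_eq_square algebra_simps)
  finally have 1: "16 * (Suc m * (4 * m * b ^ 2)) \<le> Suc m * (4 * Suc m * b' ^ 2)"
    by (simp add: algebra_simps)
  have "Suc m * 16 ^ Suc m = 16 * (Suc m * 16 ^ m)" by simp
  also have "\<dots> \<le> 16 * (Suc m * (4 * m * b ^ 2))"
    using mult_le_mono2[OF Suc.IH[folded b_def], of "Suc m"] by simp
  also have "\<dots> \<le> Suc m * (4 * Suc m * b' ^ 2)" by (rule 1)
  finally have "Suc m * 16 ^ Suc m \<le> Suc m * (4 * Suc m * b' ^ 2)" .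
  then show ?case unfolding b'_def by (simp only: mult_le_cancel1)
qed

lemma cb4: "1 \<le> m \<Longrightarrow> (4::real) ^ m \<le> 2 * sqrt m * real (2 * m choose m)"
proof -
  assume m: "1 \<le> m"
  have "real (16 ^ m) \<le> real (4 * m * (2 * m choose m) ^ 2)" using cb16[OF m] by linarith
  then have "sqrt ((4::real) ^ m * 4 ^ m) \<le> sqrt (4 * real m * real (2 * m choose m) ^ 2)"
    by (simp add: power_mult_distrib[symmetric])
  then show ?thesis by (simp add: real_sqrt_mult)
qed

lemma pow2_le: "1 \<le> n \<Longrightarrow> (2::real) ^ n \<le> 4 * sqrt n * real (n choose (n div 2))"
proof -
  assume n: "1 \<le> n"
  define m where "m = n div 2"
  have m: "n = 2 * m \<or> n = 2 * m + 1" unfolding m_def by presburger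
  show ?thesis
  proof (cases "n = 1")
    case True then show ?thesis by simp
  next
    case False
    then have m1: "1 \<le> m" using m n by auto
    have sq: "sqrt (real m) \<le> sqrt (real n)" using m by auto
    have "real (2 * m choose m) \<le> real (n choose (n div 2))"
    proof (cases "n = 2 * m")
      case True then show ?thesis by simp
    next
      case False
      then have nn: "n = Suc (2 * m)" "n div 2 = m" using m by auto
      have "2 * m choose m \<le> Suc (2 * m) choose m"
        using m1 by (cases m) auto
      then show ?thesis using nn by simp
    qed
    then have bb: "real (2 * m choose m) \<le> real (n choose (n div 2))" .
    have p: "(2::real) ^ n \<le> 2 * 4 ^ m" using m
      by (auto simp: power_mult power_add)
    also have "\<dots> \<le> 2 * (2 * sqrt m * real (2 * m choose m))" using cb4[OF m1] by simp
    also have "\<dots> = 4 * (sqrt m * real (2 * m choose m))" by simp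
    also have "\<dots> \<le> 4 * (sqrt n * real (n choose (n div 2)))"
      by (intro mult_left_mono mult_mono sq bb) auto
    finally show ?thesis by simp
  qed
qed

lemma powr_facts:
  assumes n: "1 \<le> n"
  shows "1 / sqrt (real n) \<le> real n powr (-1/3)" "1 / real n \<le> real n powr (-1/3)"
proof -
  have n1: "(1::real) \<le> real n" using n by simp
  have "real n powr (-1/2) \<le> real n powr (-1/3)" by (rule powr_mono) (use n1 in auto)
  moreover have "real n powr (-1/2) = 1 / sqrt (real n)"
    using n1 by (simp add: powr_minus_divide powr_half_sqrt)
  ultimately show "1 / sqrt (real n) \<le> real n powr (-1/3)" by simp
  have "real n powr (-1) \<le> real n powr (-1/3)" by (rule powr_mono) (use n1 in auto)
  moreover have "real n powr (-1) = 1 / real n"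
    using n1 by (simp add: powr_minus_divide)
  ultimately show "1 / real n \<le> real n powr (-1/3)" by simp
qed

theorem theorem3p2:
  fixes l' :: nat
  assumes "l' > 0"
  shows "\<exists>C::real. \<forall>n::nat. \<forall>F. n \<ge> 1 \<longrightarrow> F \<subseteq> Pow {1..n} \<longrightarrow>
           trace_sperner n (n - l') l' F \<longrightarrow>
           real (card F) \<le> C * real n powr (-1/3) * real (n choose (n div 2))"
proof -
  define K :: nat where "K = 8 * (l' * (2 ^ Suc (2 * l')))"
  define C :: real where "C = 4 * real K + 2 ^ (8 * l') * (8 * real l')"
  show ?thesis
  proof (intro exI[of _ C] allI impI)
    fix n :: nat and F
    assume n: "1 \<le> n" and FP: "F \<subseteq> Pow {1..n}" and ts: "trace_sperner n (n - l') l' F"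
    define B where "B = real (n choose (n div 2))"
    define p where "p = real n powr (-1/3)"
    have "0 < n choose (n div 2)" by (simp add: zero_less_binomial_iff)
    then have B1: "1 \<le> B" unfolding B_def by linarith
    have p0: "0 \<le> p" unfolding p_def by simp
    have n0: "0 < real n" using n by simp
    have C1: "4 * real K \<le> C" "2 ^ (8 * l') * (8 * real l') \<le> C" unfolding C_def by auto
    show "real (card F) \<le> C * real n powr (-1/3) * real (n choose (n div 2))"
    proof (cases "8 * l' \<le> n")
      case True
      have "n * card F \<le> K * 2 ^ n" using total_bound[OF FP ts True assms] unfolding K_def
        by (simp add: ac_simps)
      then have "real n * real (card F) \<le> real K * 2 ^ n"
        by (metis of_nat_le_iff of_nat_mult of_nat_numeral of_nat_power)
      also have "\<dots> \<le> real K * (4 * sqrt n * B)"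
        unfolding B_def by (intro mult_left_mono pow2_le n) auto
      finally have a: "real n * real (card F) \<le> real K * (4 * sqrt n * B)" .
      have sq: "sqrt (real n) * sqrt (real n) = real n" using n0 by simp
      have sqp: "0 < sqrt (real n)" using n0 by simp
      have "real (card F) \<le> 4 * real K * B * (1 / sqrt (real n))"
      proof -
        have "sqrt n * (sqrt n * real (card F)) \<le> sqrt n * (4 * real K * B)"
          using a sq by (simp add: ac_simps)
        then have "sqrt n * real (card F) \<le> 4 * real K * B" using sqp by simp
        then show ?thesis using sqp by (simp add: field_simps)
      qed
      also have "\<dots> \<le> 4 * real K * B * p"
        unfolding p_def using powr_facts(1)[OF n] B1 by (intro mult_left_mono) auto
      also have "\<dots> \<le> C * p * B" using C1(1) p0 B1
      proof -
        have "4 * real K * B * p = (4 * real K) * (p * B)" by (simp add: ac_simps)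
        also have "\<dots> \<le> C * (p * B)" using C1(1) p0 B1 by (intro mult_right_mono) auto
        finally show ?thesis by (simp add: ac_simps)
      qed
      finally show ?thesis unfolding p_def B_def by simp
    next
      case False
      have "card F \<le> card (Pow {1..n})" by (rule card_mono) (use FP in auto)
      then have "card F \<le> 2 ^ n" by (simp add: card_Pow)
      also have "(2::nat) ^ n \<le> 2 ^ (8 * l')" using False by (intro power_increasing) auto
      finally have cF: "real (card F) \<le> 2 ^ (8 * l')"
        by (metis of_nat_le_iff of_nat_numeral of_nat_power)
      have "(1::real) \<le> 8 * real l' * (1 / real n)" using False n0 by (simp add: field_simps)
      also have "\<dots> \<le> 8 * real l' * p" unfolding p_def using powr_facts(2)[OF n]
        by (intro mult_left_mono) auto
      finally have q: "1 \<le> 8 * real l' * p" .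
      have "real (card F) \<le> 2 ^ (8 * l') * 1" using cF by simp
      also have "\<dots> \<le> 2 ^ (8 * l') * (8 * real l' * p)" using q by (intro mult_left_mono) auto
      also have "\<dots> \<le> 2 ^ (8 * l') * (8 * real l' * p) * B"
      proof -
        have "0 \<le> 2 ^ (8 * l') * (8 * real l' * p)" using p0 by simp
        from mult_left_mono[OF B1 this] show ?thesis by simp
      qed
      also have "\<dots> = (2 ^ (8 * l') * (8 * real l')) * p * B" by (simp add: ac_simps)
      also have "\<dots> \<le> C * p * B" using C1(2) p0 B1 by (intro mult_right_mono) auto
      finally show ?thesis unfolding p_def B_def by simp
    qed
  qed
qed

end
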